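(* Let $d\ge1$ and $q\ge2$ even, and define the polynomials $P^B_{d,q}(x)=\frac{\Gamma(\frac{d+q}{2})}{\pi^{d/2}\Gamma(\frac q2)}P^{(\frac d2,-2)}_{\frac q2+1}(1-2x^2)$ and $R^B_{d,q}(x)=(d-1)\frac{P^{B(1)}_{d,q}(x)}{x}+P^{B(2)}_{d,q}(x)$. Then $P^B_{d,q}$ can be written as $P^B_{d,q}(x)=a_0(x^2-a_1^2)\cdots(x^2-a_{q/2+1}^2)$ with $a_0>0$ when $q\in\{2,6,10,\ldots\}$, $a_0<0$ when $q\in\{4,8,\ldots\}$, and $0<a_1<\cdots<a_{q/2}=a_{q/2+1}=1$. Moreover, for $j=0,\ldots,q-2$, $R^B_{d,q}(x)/x^j$ is monotonically increasing and positive for $x>1$ when $q\in\{2,6,\ldots\}$, and monotonically decreasing and negative for $x>1$ when $q\in\{4,8,\ldots\}$.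
   Context: $P^{(\alpha,\beta)}_n$ is the Jacobi polynomial $P_n^{(\alpha,\beta)}(x)=\frac{(-1)^n}{2^nn!}(1-x)^{-\alpha}(1+x)^{-\beta}\frac{d^n}{dx^n}[(1-x)^{n+\alpha}(1+x)^{n+\beta}]$. $P^{B(l)}_{d,q}$ denotes the $l$-th derivative. *)

theory Defs
  imports "HOL-Analysis.Analysis"
begin

text \<open>Jacobi polynomial P_n^(alpha,beta)(x), given by the explicit finite-sum
  expansion of the Rodrigues formula (valid for all real parameters, as a polynomial
  identity in x).\<close>
definition jacobiP :: "nat \<Rightarrow> real \<Rightarrow> real \<Rightarrow> real \<Rightarrow> real" where
  "jacobiP n \<alpha> \<beta> x =
     (\<Sum>s\<le>n. ((real n + \<alpha>) gchoose (n - s)) * ((real n + \<beta>) gchoose s)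
              * ((x - 1) / 2) ^ s * ((x + 1) / 2) ^ (n - s))"

definition PB :: "nat \<Rightarrow> nat \<Rightarrow> real \<Rightarrow> real" where
  "PB d q x = Gamma ((real d + real q) / 2) / (pi powr (real d / 2) * Gamma (real q / 2))
              * jacobiP (q div 2 + 1) (real d / 2) (-2) (1 - 2 * x\<^sup>2)"

definition RB :: "nat \<Rightarrow> nat \<Rightarrow> real \<Rightarrow> real" where
  "RB d q x = (real d - 1) * deriv (PB d q) x / x + (deriv ^^ 2) (PB d q) x"

end

theory Submission
  imports Defs "HOL-Computational_Algebra.Polynomial"
begin
lemma rolle_chain:
  fixes f f' :: "real \<Rightarrow> real" and w :: "nat \<Rightarrow> real"
  assumes mono: "\<And>i. i < N \<Longrightarrow> w i < w (Suc i)"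
    and zeros: "\<And>i. i \<le> N \<Longrightarrow> f (w i) = 0"
    and bnd: "\<And>i. i \<le> N \<Longrightarrow> a \<le> w i \<and> w i \<le> b"
    and cont: "continuous_on {a..b} f"
    and der: "\<And>x. a < x \<Longrightarrow> x < b \<Longrightarrow> (f has_real_derivative f' x) (at x)"
  shows "\<exists>y. \<forall>i<N. w i < y i \<and> y i < w (Suc i) \<and> f' (y i) = 0"
proof -
  have "\<exists>z. w i < z \<and> z < w (Suc i) \<and> f' z = 0" if i: "i < N" for i
  proof -
    have b1: "a \<le> w i" "w (Suc i) \<le> b" using bnd[of i] bnd[of "Suc i"] i by auto
    have "continuous_on {w i..w (Suc i)} f"
      by (rule continuous_on_subset[OF cont]) (use b1 in auto)
    moreover have "f (w i) = f (w (Suc i))" using zeros[of i] zeros[of "Suc i"] i by auto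
    moreover have "f differentiable (at x)" if "w i < x" "x < w (Suc i)" for x
      using der[of x] that b1 real_differentiable_def by force
    ultimately obtain z where z: "w i < z" "z < w (Suc i)" "DERIV f z :> 0"
      using Rolle[of "w i" "w (Suc i)" f] mono[OF i] by blast
    have "DERIV f z :> f' z" using der[of z] z b1 by auto
    then have "f' z = 0" using DERIV_unique z(3) by blast
    then show ?thesis using z by blast
  qed
  then show ?thesis by metis
qed

lemma poly_factor_roots:
  fixes p :: "real poly" and r :: "nat \<Rightarrow> real"
  assumes "degree p \<le> N" "\<And>i. i < N \<Longrightarrow> poly p (r i) = 0"
    "\<And>i j. i < N \<Longrightarrow> j < N \<Longrightarrow> i \<noteq> j \<Longrightarrow> r i \<noteq> r j"
  shows "poly p u = coeff p N * (\<Prod>i<N. u - r i)"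
  using assms
proof (induction N arbitrary: p)
  case 0
  then have "degree p = 0" by simp
  then obtain c where "p = [:c:]" by (rule degree_eq_zeroE)
  then show ?case by simp
next
  case (Suc N)
  have "[:- r N, 1:] dvd p" using Suc.prems(2)[of N] poly_eq_0_iff_dvd by auto
  then obtain s where s: "p = [:- r N, 1:] * s" by (elim dvdE)
  have ds: "degree s \<le> N"
  proof (cases "s = 0")
    case False
    then have "degree p = degree [:- r N, 1:] + degree s" unfolding s
      by (intro degree_mult_eq) auto
    then have "degree p = Suc (degree s)" by simp
    then show ?thesis using Suc.prems(1) by simp
  qed simp
  have "poly s (r i) = 0" if "i < N" for i
  proof -
    have "poly p (r i) = 0" using Suc.prems(2) that by simp
    moreover have "r i \<noteq> r N" using Suc.prems(3)[of i N] that by simp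
    ultimately show ?thesis using s by simp
  qed
  then have IH: "poly s u = coeff s N * (\<Prod>i<N. u - r i)"
    using Suc.IH[OF ds] Suc.prems(3) by simp
  have c: "coeff p (Suc N) = coeff s N"
    using ds s by (simp add: coeff_eq_0)
  have "poly p u = poly [:- r N, 1:] u * poly s u" by (subst s) (rule poly_mult)
  then have "poly p u = (u - r N) * poly s u" by simp
  then show ?case using IH c by (simp add: algebra_simps lessThan_Suc)
qed

lemma monic_linear_prod:
  fixes r :: "nat \<Rightarrow> real"
  shows "degree (\<Prod>i<N. [:- r i, 1:]) = N \<and> coeff (\<Prod>i<N. [:- r i, 1:]) N = 1"
proof (induction N)
  case 0
  then show ?case by simp
next
  case (Suc N)
  let ?P = "\<Prod>i<N. [:- r i, 1:]"
  have "?P \<noteq> 0" using Suc by auto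
  then have "degree (?P * [:- r N, 1:]) = degree ?P + degree [:- r N, 1:]"
    by (intro degree_mult_eq) auto
  then have d: "degree (?P * [:- r N, 1:]) = Suc N" using Suc by simp
  have "coeff (?P * [:- r N, 1:]) (degree ?P + degree [:- r N, 1:]) = 1"
    by (subst coeff_mult_degree_sum) (use Suc in simp)
  then show ?case using d Suc by (simp del: mult_pCons_right mult_pCons_left)
qed

definition ff :: "real \<Rightarrow> nat \<Rightarrow> real" where "ff a j = (\<Prod>i<j. a - real i)"

fun cc :: "real \<Rightarrow> nat \<Rightarrow> nat \<Rightarrow> nat \<Rightarrow> real" where
  "cc A M 0 s = (if s = 0 then 1 else 0)"
| "cc A M (Suc k) s = cc A M k s * (A - real k + real s)
      - (if s = 0 then 0 else cc A M k (s - 1) * (real M - real s + 1))"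

definition TT :: "real \<Rightarrow> nat \<Rightarrow> nat \<Rightarrow> nat \<Rightarrow> real \<Rightarrow> real" where
  "TT A M k s u = u powr (A - real k + real s) * (1 - u) ^ (M - s)"

definition gg :: "real \<Rightarrow> nat \<Rightarrow> nat \<Rightarrow> real \<Rightarrow> real" where
  "gg A M k u = (\<Sum>s\<le>k. cc A M k s * TT A M k s u)"

definition PP :: "real \<Rightarrow> nat \<Rightarrow> nat \<Rightarrow> real poly" where
  "PP A M k = (\<Sum>s\<le>k. smult (cc A M k s) ([:0,1:] ^ s * [:1,-1:] ^ (k - s)))"

lemma cc_zero: "k < s \<Longrightarrow> cc A M k s = 0"
  by (induction k arbitrary: s) auto

lemma TT_deriv:
  assumes "0 < u" "u < 1" "s < M"
  shows "(TT A M k s has_real_derivative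
           ((A - real k + real s) * TT A M (Suc k) s u - real (M - s) * TT A M (Suc k) (Suc s) u)) (at u)"
proof -
  have e2: "u powr (A - real (Suc k) + real (Suc s)) = u powr (A - real k + real s)"
    by (simp add: algebra_simps)
  have e4: "(A - real k + real s) * u powr (A - real k + real s - 1) = (A - real k + real s) * u powr (A - real (Suc k) + real s)"
    by (simp add: algebra_simps)
  have "((\<lambda>u. u powr (A - real k + real s) * (1 - u) ^ (M - s)) has_real_derivative
     (A - real k + real s) * u powr (A - real k + real s - 1) * (1 - u) ^ (M - s)
      + u powr (A - real k + real s) * (real (M - s) * (1 - u) ^ (M - s - 1) * (-1))) (at u)"
    using assms
    by (intro derivative_eq_intros has_real_derivative_powr refl) auto
  moreover have "(A - real k + real s) * u powr (A - real k + real s - 1) * (1 - u) ^ (M - s)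
      + u powr (A - real k + real s) * (real (M - s) * (1 - u) ^ (M - s - 1) * (-1))
      = (A - real k + real s) * TT A M (Suc k) s u - real (M - s) * TT A M (Suc k) (Suc s) u"
    unfolding TT_def e2 using e4 by (simp add: algebra_simps)
  ultimately show ?thesis unfolding TT_def by simp
qed

lemma gg_deriv:
  assumes "0 < u" "u < 1" "k < M"
  shows "(gg A M k has_real_derivative gg A M (Suc k) u) (at u)"
proof -
  let ?T = "\<lambda>s. TT A M (Suc k) s u"
  have D: "((\<lambda>u. \<Sum>s\<le>k. cc A M k s * TT A M k s u) has_real_derivative
      (\<Sum>s\<le>k. cc A M k s * ((A - real k + real s) * ?T s - real (M - s) * ?T (Suc s)))) (at u)"
    by (intro DERIV_sum DERIV_cmult TT_deriv) (use assms in auto)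
  have s1: "(\<Sum>s\<le>Suc k. cc A M k s * (A - real k + real s) * ?T s)
      = (\<Sum>s\<le>k. cc A M k s * (A - real k + real s) * ?T s)"
    by (simp add: cc_zero)
  have s2: "(\<Sum>s\<le>Suc k. (if s = 0 then 0 else cc A M k (s - 1) * (real M - real s + 1)) * ?T s)
      = (\<Sum>s\<le>k. cc A M k s * real (M - s) * ?T (Suc s))"
  proof -
    have "(\<Sum>s\<le>Suc k. (if s = 0 then 0 else cc A M k (s - 1) * (real M - real s + 1)) * ?T s)
        = (\<Sum>s\<le>k. cc A M k s * (real M - real (Suc s) + 1) * ?T (Suc s))"
      by (subst sum.atMost_Suc_shift) simp
    also have "\<dots> = (\<Sum>s\<le>k. cc A M k s * real (M - s) * ?T (Suc s))"
      by (intro sum.cong refl) (use assms in \<open>auto simp: of_nat_diff\<close>)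
    finally show ?thesis .
  qed
  have "gg A M (Suc k) u = (\<Sum>s\<le>Suc k. cc A M k s * (A - real k + real s) * ?T s)
      - (\<Sum>s\<le>Suc k. (if s = 0 then 0 else cc A M k (s - 1) * (real M - real s + 1)) * ?T s)"
    unfolding gg_def by (simp add: sum_subtractf[symmetric] algebra_simps del: sum.atMost_Suc)
  also have "\<dots> = (\<Sum>s\<le>k. cc A M k s * ((A - real k + real s) * ?T s - real (M - s) * ?T (Suc s)))"
    unfolding s1 s2 by (simp add: sum_subtractf[symmetric] algebra_simps)
  finally show ?thesis using D unfolding gg_def[abs_def] by simp
qed

lemma gg_factor:
  assumes "0 < u" "u < 1" "k \<le> M"
  shows "gg A M k u = u powr (A - real k) * (1 - u) ^ (M - k) * poly (PP A M k) u"
proof -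
  have "TT A M k s u = u powr (A - real k) * (1 - u) ^ (M - k) * (u ^ s * (1 - u) ^ (k - s))"
    if "s \<le> k" for s
  proof -
    have "u powr (A - real k + real s) = u powr (A - real k) * u ^ s"
      using assms by (simp add: powr_add powr_realpow)
    moreover have "(1 - u) ^ (M - s) = (1 - u) ^ (M - k) * (1 - u) ^ (k - s)"
      using that assms by (simp add: power_add[symmetric])
    ultimately show ?thesis unfolding TT_def by simp
  qed
  then show ?thesis
    unfolding gg_def PP_def by (simp add: poly_sum sum_distrib_left algebra_simps)
qed

lemma gg_at0: "gg A M k 0 = 0"
  unfolding gg_def TT_def by simp

lemma gg_at1: "k < M \<Longrightarrow> gg A M k 1 = 0"
  unfolding gg_def TT_def by (auto intro!: sum.neutral)

lemma gg_cont:
  assumes "real k < A"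
  shows "continuous_on {0..1} (gg A M k)"
  unfolding gg_def[abs_def] TT_def using assms
  by (intro continuous_intros continuous_on_powr') auto

lemma degree_PP: "degree (PP A M k) \<le> k"
  unfolding PP_def
proof (intro degree_sum_le)
  fix s assume "s \<in> {..k}"
  have "degree ([:0,1:] ^ s * [:1,-1::real:] ^ (k - s)) \<le> degree ([:0,1::real:] ^ s) + degree ([:1,-1::real:] ^ (k - s))"
    by (rule degree_mult_le)
  also have "\<dots> \<le> s + (k - s)"
    by (intro add_mono order.trans[OF degree_power_le]) auto
  finally show "degree (smult (cc A M k s) ([:0, 1:] ^ s * [:1, - 1:] ^ (k - s))) \<le> k"
    using \<open>s \<in> {..k}\<close> by (simp add: order.trans[OF degree_smult_le])
qed simp

lemma PP_roots:
  assumes "real m < A" "m < M"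
  shows "k \<le> m \<Longrightarrow> \<exists>z. (\<forall>i<k. 0 < z i \<and> z i < 1 \<and> poly (PP A M k) (z i) = 0)
                     \<and> (\<forall>i. Suc i < k \<longrightarrow> z i < z (Suc i))"
proof (induction k)
  case 0
  then show ?case by auto
next
  case (Suc k)
  then obtain z where z: "\<forall>i<k. 0 < z i \<and> z i < 1 \<and> poly (PP A M k) (z i) = 0"
    "\<forall>i. Suc i < k \<longrightarrow> z i < z (Suc i)" by auto
  define w where "w i = (if i = 0 then 0 else if i \<le> k then z (i - 1) else 1)" for i
  have wb: "0 \<le> w i \<and> w i \<le> 1" for i using z(1) unfolding w_def
    by (auto simp: less_imp_le)
  have wm: "w i < w (Suc i)" if "i < Suc k" for i
  proof (cases "i = 0")
    case True
    then show ?thesis using z(1) by (auto simp: w_def)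
  next
    case False
    show ?thesis
    proof (cases "i = k")
      case True
      then show ?thesis using False z(1) by (simp add: w_def)
    next
      case ik: False
      then have "i < k" using that by simp
      then have "z (i - 1) < z i" using z(2)[rule_format, of "i - 1"] False by simp
      then show ?thesis using False ik \<open>i < k\<close> by (simp add: w_def)
    qed
  qed
  have wz: "gg A M k (w i) = 0" if "i \<le> Suc k" for i
  proof -
    have "i = 0 \<or> (1 \<le> i \<and> i \<le> k) \<or> i = Suc k" using that by auto
    then consider "i = 0" | "1 \<le> i" "i \<le> k" | "i = Suc k" by blast
    then show ?thesis
    proof cases
      case 1 then show ?thesis by (simp add: w_def gg_at0)
    next
      case 2
      then have "0 < z (i - 1)" "z (i - 1) < 1" "poly (PP A M k) (z (i - 1)) = 0" using z(1) by auto
      then show ?thesis using 2 Suc.prems assms by (simp add: w_def gg_factor)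
    next
      case 3 then show ?thesis using Suc.prems assms by (simp add: w_def gg_at1)
    qed
  qed
  have "\<exists>y. \<forall>i<Suc k. w i < y i \<and> y i < w (Suc i) \<and> gg A M (Suc k) (y i) = 0"
  proof (rule rolle_chain[where a = 0 and b = 1 and f = "gg A M k"])
    show "\<And>i. i < Suc k \<Longrightarrow> w i < w (Suc i)" by (rule wm)
    show "\<And>i. i \<le> Suc k \<Longrightarrow> gg A M k (w i) = 0" by (rule wz)
    show "\<And>i. i \<le> Suc k \<Longrightarrow> 0 \<le> w i \<and> w i \<le> 1" using wb by blast
    have "real k < A" using Suc.prems assms(1) by linarith
    then show "continuous_on {0..1} (gg A M k)" by (rule gg_cont)
    have "k < M" using Suc.prems assms(2) by linarith
    then show "\<And>x. 0 < x \<Longrightarrow> x < 1 \<Longrightarrow> (gg A M k has_real_derivative gg A M (Suc k) x) (at x)"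
      by (intro gg_deriv)
  qed
  then obtain y where y: "\<forall>i<Suc k. w i < y i \<and> y i < w (Suc i) \<and> gg A M (Suc k) (y i) = 0"
    by blast
  have "0 < y i \<and> y i < 1 \<and> poly (PP A M (Suc k)) (y i) = 0" if "i < Suc k" for i
  proof -
    have yb: "0 < y i" "y i < 1" using y that wb[of i] wb[of "Suc i"] by force+
    then have "gg A M (Suc k) (y i) = y i powr (A - real (Suc k)) * (1 - y i) ^ (M - Suc k) * poly (PP A M (Suc k)) (y i)"
      using Suc.prems assms by (intro gg_factor) auto
    then show ?thesis using yb y that by simp
  qed
  moreover have "y i < y (Suc i)" if "Suc i < Suc k" for i
    using y that by (meson Suc_lessD order.strict_trans)
  ultimately show ?case by blast
qed

lemma ff_Suc: "ff a (Suc k) = ff a k * (a - real k)"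
  unfolding ff_def by simp

lemma ff_shift: "ff a (Suc k) = a * ff (a - 1) k"
  unfolding ff_def by (subst prod.lessThan_Suc_shift) (simp add: algebra_simps)

lemma gch_ff: "a gchoose k = ff a k / fact k"
  unfolding gbinomial_prod_rev ff_def by (simp add: atLeast0LessThan)

lemma ff_nat: "s \<le> N \<Longrightarrow> ff (real N) s = fact N / fact (N - s)"
proof -
  assume "s \<le> N"
  then have "(real (N choose s)) = fact N / (fact s * fact (N - s))" by (rule binomial_fact)
  moreover have "real (N choose s) = ff (real N) s / fact s"
    by (simp add: binomial_gbinomial gch_ff)
  ultimately show ?thesis by (simp add: field_simps)
qed

lemma cc_closed:
  "s \<le> k \<Longrightarrow> cc A M k s = real (k choose s) * ff A (k - s) * (-1) ^ s * ff (real M) s"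
proof (induction k arbitrary: s)
  case 0
  then show ?case by (simp add: ff_def)
next
  case (Suc k)
  have "s = 0 \<or> s = Suc k \<or> (\<exists>t. s = Suc t \<and> t < k)" using Suc.prems by (cases s) auto
  then consider "s = 0" | "s = Suc k" | t where "s = Suc t" "t < k" by blast
  then show ?case
  proof cases
    case 1
    then show ?thesis using Suc.IH[of 0] by (simp add: ff_Suc)
  next
    case 2
    then have "cc A M (Suc k) s = - cc A M k k * (real M - real k)"
      by (simp add: cc_zero)
    also have "\<dots> = - ((-1) ^ k * ff (real M) k) * (real M - real k)"
      using Suc.IH[of k] by (simp add: ff_def)
    also have "\<dots> = real (Suc k choose s) * ff A (Suc k - s) * (- 1) ^ s * ff (real M) s"
      using 2 by (simp add: ff_Suc ff_def)
    finally show ?thesis .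
  next
    case 3
    have e1: "ff A (k - s) * (A - real k + real s) = ff A (Suc k - s)"
    proof -
      have "Suc k - s = Suc (k - s)" using 3 by simp
      then show ?thesis using 3 by (simp add: ff_Suc of_nat_diff algebra_simps)
    qed
    have e2: "ff (real M) t * (real M - real s + 1) = ff (real M) s"
      using 3 by (simp add: ff_Suc)
    have e3: "Suc k - s = k - t" using 3 by simp
    have "cc A M (Suc k) s = cc A M k s * (A - real k + real s) - cc A M k t * (real M - real s + 1)"
      using 3 by simp
    also have "\<dots> = real (k choose s) * (ff A (k - s) * (A - real k + real s)) * (-1) ^ s * ff (real M) s
        - real (k choose t) * ff A (k - t) * (-1) ^ t * (ff (real M) t * (real M - real s + 1))"
      using Suc.IH[of s] Suc.IH[of t] 3 by simp
    also have "\<dots> = (real (k choose s) + real (k choose t)) * ff A (Suc k - s) * (-1) ^ s * ff (real M) s"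
      unfolding e1 e2 e3 using 3 by (simp add: algebra_simps)
    also have "\<dots> = real (Suc k choose s) * ff A (Suc k - s) * (-1) ^ s * ff (real M) s"
      using 3 by simp
    finally show ?thesis .
  qed
qed

lemma cc_jacobi:
  assumes "s \<le> m" "0 < A"
  shows "cc A (m + 2) m s = fact (m + 2) / ((A + 1) * (A + 2))
            * ((A + 2) gchoose (m + 2 - s)) * real (m choose s) * (-1) ^ s"
proof -
  have "ff (A + 2) (m + 2 - s) = (A + 2) * ((A + 1) * ff A (m - s))"
  proof -
    have "m + 2 - s = Suc (Suc (m - s))" using assms by simp
    then show ?thesis by (simp add: ff_shift algebra_simps)
  qed
  moreover have "ff (real (m + 2)) s = fact (m + 2) / fact (m + 2 - s)"
    using assms by (intro ff_nat) auto
  moreover have alg: "\<And>(a::real) X c e F G C sg. c = X * a \<Longrightarrow> e = F / G \<Longrightarrow> G \<noteq> 0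
      \<Longrightarrow> X \<noteq> 0 \<Longrightarrow> C * a * sg * e = F / X * (c / G) * C * sg"
    by (simp add: field_simps)
  moreover have "(A + 1) * (A + 2) \<noteq> 0" using assms by simp
  ultimately show ?thesis using assms unfolding cc_closed[OF assms(1)] gch_ff
    by (intro alg) (auto simp: algebra_simps)
qed

lemma jacobi_expand:
  fixes m :: nat and A x :: real
  assumes "real (m + 2) + al = A + 2"
  shows "jacobiP (m + 2) al (-2) (1 - 2 * x\<^sup>2) = (1 - x\<^sup>2)\<^sup>2 *
     (\<Sum>s\<le>m. ((A + 2) gchoose (m + 2 - s)) * real (m choose s) * (-1) ^ s * (x\<^sup>2) ^ s * (1 - x\<^sup>2) ^ (m - s))"
proof -
  have e1: "real (m + 2) + -2 = real m" by simp
  have e2: "(1 - 2 * x\<^sup>2 - 1) / 2 = - x\<^sup>2" "(1 - 2 * x\<^sup>2 + 1) / 2 = 1 - x\<^sup>2" by simp_all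
  have "jacobiP (m + 2) al (-2) (1 - 2 * x\<^sup>2) =
     (\<Sum>s\<le>m + 2. ((A + 2) gchoose (m + 2 - s)) * real (m choose s) * (- x\<^sup>2) ^ s * (1 - x\<^sup>2) ^ (m + 2 - s))"
    unfolding jacobiP_def assms e1 e2 by (simp add: binomial_gbinomial)
  also have "\<dots> = (\<Sum>s\<le>m. ((A + 2) gchoose (m + 2 - s)) * real (m choose s) * (- x\<^sup>2) ^ s * (1 - x\<^sup>2) ^ (m + 2 - s))"
    by (simp add: binomial_eq_0)
  also have "\<dots> = (\<Sum>s\<le>m. (1 - x\<^sup>2)\<^sup>2 * (((A + 2) gchoose (m + 2 - s)) * real (m choose s) * (-1) ^ s * (x\<^sup>2) ^ s * (1 - x\<^sup>2) ^ (m - s)))"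
  proof (intro sum.cong refl)
    fix s assume "s \<in> {..m}"
    then have "m + 2 - s = 2 + (m - s)" by simp
    then have "(1 - x\<^sup>2) ^ (m + 2 - s) = (1 - x\<^sup>2)\<^sup>2 * (1 - x\<^sup>2) ^ (m - s)"
      by (simp only: power_add)
    moreover have "(- x\<^sup>2) ^ s = (-1) ^ s * (x\<^sup>2) ^ s"
      by (simp add: power_mult_distrib[symmetric])
    ultimately show "((A + 2) gchoose (m + 2 - s)) * real (m choose s) * (- x\<^sup>2) ^ s * (1 - x\<^sup>2) ^ (m + 2 - s)
      = (1 - x\<^sup>2)\<^sup>2 * (((A + 2) gchoose (m + 2 - s)) * real (m choose s) * (-1) ^ s * (x\<^sup>2) ^ s * (1 - x\<^sup>2) ^ (m - s))"
      by simp
  qed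
  also have "\<dots> = (1 - x\<^sup>2)\<^sup>2 *
     (\<Sum>s\<le>m. ((A + 2) gchoose (m + 2 - s)) * real (m choose s) * (-1) ^ s * (x\<^sup>2) ^ s * (1 - x\<^sup>2) ^ (m - s))"
    by (simp add: sum_distrib_left)
  finally show ?thesis .
qed

lemma PP_jacobi:
  assumes "0 < A"
  shows "poly (PP A (m + 2) m) u = fact (m + 2) / ((A + 1) * (A + 2)) *
     (\<Sum>s\<le>m. ((A + 2) gchoose (m + 2 - s)) * real (m choose s) * (-1) ^ s * u ^ s * (1 - u) ^ (m - s))"
  unfolding PP_def poly_sum sum_distrib_left
proof (intro sum.cong refl)
  fix s assume s: "s \<in> {..m}"
  show "poly (smult (cc A (m + 2) m s) ([:0, 1:] ^ s * [:1, - 1:] ^ (m - s))) u =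
    fact (m + 2) / ((A + 1) * (A + 2)) *
    (((A + 2) gchoose (m + 2 - s)) * real (m choose s) * (- 1) ^ s * u ^ s * (1 - u) ^ (m - s))"
  proof -
    have c: "cc A (m + 2) m s = fact (m + 2) / ((A + 1) * (A + 2))
            * ((A + 2) gchoose (m + 2 - s)) * real (m choose s) * (-1) ^ s"
      by (rule cc_jacobi) (use s assms in auto)
    have p: "poly ([:0, 1:] ^ s * [:1, - 1:] ^ (m - s)) u = u ^ s * (1 - u) ^ (m - s)" by simp
    show ?thesis by (simp only: poly_smult p c)
  qed
qed

lemma div_helper: "(k::real) \<noteq> 0 \<Longrightarrow> P = k * S \<Longrightarrow> S = P / k"
  by simp

lemma PB_expand:
  fixes d q :: nat and x :: real
  assumes "q \<ge> 2"
  defines "m \<equiv> q div 2 - 1" and "A \<equiv> real (q div 2 - 1) + real d / 2"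
  assumes "d \<ge> 1"
  shows "PB d q x = Gamma ((real d + real q) / 2) / (pi powr (real d / 2) * Gamma (real q / 2))
     / (fact (m + 2) / ((A + 1) * (A + 2))) * (1 - x\<^sup>2)\<^sup>2 * poly (PP A (m + 2) m) (x\<^sup>2)"
proof -
  have n: "q div 2 + 1 = m + 2" using assms(1) unfolding m_def by simp
  have A0: "0 < A" using assms(4) unfolding A_def m_def by simp
  have k: "fact (m + 2) / ((A + 1) * (A + 2)) \<noteq> 0" using A0 by simp
  have "PB d q x = Gamma ((real d + real q) / 2) / (pi powr (real d / 2) * Gamma (real q / 2))
     * jacobiP (m + 2) (real d / 2) (-2) (1 - 2 * x\<^sup>2)"
    unfolding PB_def n by simp
  also have "jacobiP (m + 2) (real d / 2) (-2) (1 - 2 * x\<^sup>2) = (1 - x\<^sup>2)\<^sup>2 *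
     (\<Sum>s\<le>m. ((A + 2) gchoose (m + 2 - s)) * real (m choose s) * (-1) ^ s * (x\<^sup>2) ^ s * (1 - x\<^sup>2) ^ (m - s))"
    by (rule jacobi_expand) (simp add: A_def m_def)
  also have "(\<Sum>s\<le>m. ((A + 2) gchoose (m + 2 - s)) * real (m choose s) * (-1) ^ s * (x\<^sup>2) ^ s * (1 - x\<^sup>2) ^ (m - s))
     = poly (PP A (m + 2) m) (x\<^sup>2) / (fact (m + 2) / ((A + 1) * (A + 2)))"
    by (rule div_helper[OF k PP_jacobi[OF A0]])
  finally show ?thesis by simp
qed

lemma h_mono:
  fixes t x y :: real
  assumes "0 < t" "t < 1" "e \<le> 2" "1 < x" "x \<le> y"
  shows "0 < (x\<^sup>2 - t) / x ^ e \<and> (x\<^sup>2 - t) / x ^ e \<le> (y\<^sup>2 - t) / y ^ e"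
proof -
  have x2: "1 < x\<^sup>2" using assms by (simp add: one_less_power)
  have xy2: "x\<^sup>2 \<le> y\<^sup>2" using assms by (intro power_mono) auto
  have "t < x\<^sup>2" using x2 assms by linarith
  then have pos: "0 < (x\<^sup>2 - t) / x ^ e" using assms by (intro divide_pos_pos) auto
  consider "e = 0" | "e = 1" | "e = 2" using assms by linarith
  then show ?thesis
  proof cases
    case 1 then show ?thesis using pos xy2 by simp
  next
    case 2
    have a: "(x\<^sup>2 - t) / x ^ e = x - t / x" "(y\<^sup>2 - t) / y ^ e = y - t / y"
      using 2 assms by (simp_all add: field_simps power2_eq_square)
    have "t / y \<le> t / x" using assms by (intro divide_left_mono) auto
    then show ?thesis using pos a assms by simp
  next
    case 3
    have a: "(x\<^sup>2 - t) / x ^ e = 1 - t / x\<^sup>2" "(y\<^sup>2 - t) / y ^ e = 1 - t / y\<^sup>2"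
      using 3 assms by (simp_all add: field_simps)
    have "t / y\<^sup>2 \<le> t / x\<^sup>2" using assms xy2 x2 by (intro divide_left_mono) auto
    then show ?thesis using pos a assms by simp
  qed
qed

lemma prodq:
  fixes tau :: "nat \<Rightarrow> real"
  assumes "\<forall>i<k. 0 < tau i \<and> tau i < 1" "j \<le> 2 * k"
  shows "(\<forall>x>1. 0 < (\<Prod>i<k. x\<^sup>2 - tau i) / x ^ j) \<and>
         (\<forall>x y. 1 < x \<longrightarrow> x \<le> y \<longrightarrow> (\<Prod>i<k. x\<^sup>2 - tau i) / x ^ j \<le> (\<Prod>i<k. y\<^sup>2 - tau i) / y ^ j)"
  using assms
proof (induction k arbitrary: j)
  case 0
  then show ?case by simp
next
  case (Suc k)
  define e where "e = min j 2"
  define j' where "j' = j - e"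
  have jj: "j = j' + e" "j' \<le> 2 * k" "e \<le> 2" using Suc.prems unfolding e_def j'_def by auto
  have IH: "(\<forall>x>1. 0 < (\<Prod>i<k. x\<^sup>2 - tau i) / x ^ j') \<and>
         (\<forall>x y. 1 < x \<longrightarrow> x \<le> y \<longrightarrow> (\<Prod>i<k. x\<^sup>2 - tau i) / x ^ j' \<le> (\<Prod>i<k. y\<^sup>2 - tau i) / y ^ j')"
    using Suc.IH[OF _ jj(2)] Suc.prems(1) by auto
  have split: "(\<Prod>i<Suc k. x\<^sup>2 - tau i) / x ^ j = ((\<Prod>i<k. x\<^sup>2 - tau i) / x ^ j') * ((x\<^sup>2 - tau k) / x ^ e)"
    for x :: real
    unfolding jj(1) by (simp add: power_add)
  have tk: "0 < tau k" "tau k < 1" using Suc.prems(1) by auto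
  show ?case
  proof (intro conjI allI impI)
    fix x :: real assume "1 < x"
    have "0 < (\<Prod>i<k. x\<^sup>2 - tau i) / x ^ j'" using IH \<open>1 < x\<close> by blast
    moreover have "0 < (x\<^sup>2 - tau k) / x ^ e" using h_mono[OF tk jj(3), of x x] \<open>1 < x\<close> by simp
    ultimately show "0 < (\<Prod>i<Suc k. x\<^sup>2 - tau i) / x ^ j"
      unfolding split by (rule mult_pos_pos)
  next
    fix x y :: real assume xy: "1 < x" "x \<le> y"
    have "((\<Prod>i<k. x\<^sup>2 - tau i) / x ^ j') * ((x\<^sup>2 - tau k) / x ^ e)
        \<le> ((\<Prod>i<k. y\<^sup>2 - tau i) / y ^ j') * ((y\<^sup>2 - tau k) / y ^ e)"
      using IH h_mono[OF tk jj(3) xy] xy by (intro mult_mono) (auto intro: less_imp_le)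
    then show "(\<Prod>i<Suc k. x\<^sup>2 - tau i) / x ^ j \<le> (\<Prod>i<Suc k. y\<^sup>2 - tau i) / y ^ j"
      unfolding split .
  qed
qed

lemma RB_poly:
  assumes "\<forall>x. PB d q x = poly F (x\<^sup>2)" "x \<noteq> 0"
  shows "RB d q x = 4 * (real d / 2 * poly (pderiv F) (x\<^sup>2) + x\<^sup>2 * poly (pderiv (pderiv F)) (x\<^sup>2))"
proof -
  have e: "PB d q = (\<lambda>x. poly F (x\<^sup>2))" using assms(1) by auto
  have sq: "((\<lambda>x. x\<^sup>2) has_real_derivative 2 * y) (at y)" for y :: real
    by (auto intro!: derivative_eq_intros)
  have d1: "deriv (PB d q) y = poly (pderiv F) (y\<^sup>2) * (2 * y)" for y
    unfolding e by (rule DERIV_imp_deriv, rule DERIV_chain2[OF poly_DERIV sq])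
  have dd: "deriv (PB d q) = (\<lambda>y. poly (pderiv F) (y\<^sup>2) * (2 * y))" using d1 by auto
  have "((\<lambda>y. poly (pderiv F) (y\<^sup>2) * (2 * y)) has_real_derivative
        poly (pderiv (pderiv F)) (x\<^sup>2) * (2 * x) * (2 * x) + poly (pderiv F) (x\<^sup>2) * 2) (at x)"
    by (intro derivative_eq_intros DERIV_chain2[OF poly_DERIV sq]) auto
  then have d2: "deriv (deriv (PB d q)) x = poly (pderiv (pderiv F)) (x\<^sup>2) * (2 * x) * (2 * x) + poly (pderiv F) (x\<^sup>2) * 2"
    unfolding dd by (rule DERIV_imp_deriv)
  show ?thesis
    unfolding RB_def using d1[of x] d2 assms(2)
    by (simp add: numeral_2_eq_2 field_simps power2_eq_square)
qed

lemma chain_mono: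
  fixes z :: "nat \<Rightarrow> real"
  assumes "\<forall>i. Suc i < m \<longrightarrow> z i < z (Suc i)"
  shows "i < j \<Longrightarrow> j < m \<Longrightarrow> z i < z j"
proof (induction j)
  case 0 then show ?case by simp
next
  case (Suc j)
  then show ?case using assms
    by (cases "i = j") (auto intro: order.strict_trans)
qed

lemma sum_delta0: "(\<Sum>s\<le>(m::nat). (G s::real) * (if s = 0 then 1 else 0)) = G 0"
  by (induction m) auto

lemma pb_setup:
  fixes d q :: nat
  assumes "d \<ge> 1" and "q \<ge> 2"
  defines "m \<equiv> q div 2 - 1"
  shows "\<exists>a0 rho. (\<forall>x. PB d q x = a0 * (\<Prod>i<m + 2. x\<^sup>2 - rho i))
     \<and> (\<forall>i<m. 0 < rho i \<and> rho i < 1) \<and> (\<forall>i. Suc i < m \<longrightarrow> rho i < rho (Suc i))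
     \<and> (\<forall>i. m \<le> i \<longrightarrow> rho i = 1) \<and> PB d q 0 > 0"
proof -
  define A where "A = real (q div 2 - 1) + real d / 2"
  define Kc where "Kc = Gamma ((real d + real q) / 2) / (pi powr (real d / 2) * Gamma (real q / 2))"
  define kap where "kap = fact (m + 2) / ((A + 1) * (A + 2))"
  have Am: "real m < A" "0 < A" using assms(1) unfolding A_def m_def by auto
  have kap0: "kap > 0" using Am unfolding kap_def by simp
  have Kc0: "Kc > 0" unfolding Kc_def using assms
    by (intro divide_pos_pos mult_pos_pos Gamma_real_pos) auto
  have PBe: "PB d q x = Kc / kap * (1 - x\<^sup>2)\<^sup>2 * poly (PP A (m + 2) m) (x\<^sup>2)" for x
    unfolding Kc_def kap_def A_def m_def by (rule PB_expand) (use assms in auto)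
  obtain z where z: "\<forall>i<m. 0 < z i \<and> z i < 1 \<and> poly (PP A (m + 2) m) (z i) = 0"
      "\<forall>i. Suc i < m \<longrightarrow> z i < z (Suc i)"
    using PP_roots[of m A "m + 2" m] Am by auto
  have zm: "\<And>i j. i < j \<Longrightarrow> j < m \<Longrightarrow> z i < z j" using chain_mono[OF z(2)] by blast
  define L where "L = coeff (PP A (m + 2) m) m"
  have fac: "poly (PP A (m + 2) m) u = L * (\<Prod>i<m. u - z i)" for u
    unfolding L_def
  proof (rule poly_factor_roots)
    show "degree (PP A (m + 2) m) \<le> m" by (rule degree_PP)
    show "\<And>i. i < m \<Longrightarrow> poly (PP A (m + 2) m) (z i) = 0" using z(1) by auto
    show "\<And>i j. i < m \<Longrightarrow> j < m \<Longrightarrow> i \<noteq> j \<Longrightarrow> z i \<noteq> z j"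
      using zm by (metis less_irrefl nat_neq_iff)
  qed
  define rho where "rho i = (if i < m then z i else 1)" for i
  define a0 where "a0 = Kc / kap * L"
  have "PB d q x = a0 * (\<Prod>i<m + 2. x\<^sup>2 - rho i)" for x
  proof -
    have "(\<Prod>i<m + 2. x\<^sup>2 - rho i) = (\<Prod>i<m. x\<^sup>2 - rho i) * (x\<^sup>2 - 1) * (x\<^sup>2 - 1)"
      by (simp add: rho_def)
    also have "(\<Prod>i<m. x\<^sup>2 - rho i) = (\<Prod>i<m. x\<^sup>2 - z i)"
      by (intro prod.cong) (auto simp: rho_def)
    finally have "(\<Prod>i<m + 2. x\<^sup>2 - rho i) = (\<Prod>i<m. x\<^sup>2 - z i) * (1 - x\<^sup>2)\<^sup>2"
      by (simp add: power2_eq_square algebra_simps)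
    then show ?thesis unfolding PBe fac a0_def by (simp add: algebra_simps)
  qed
  moreover have "PB d q 0 > 0"
  proof -
    have "poly (PP A (m + 2) m) 0 = kap * ((A + 2) gchoose (m + 2))"
      unfolding kap_def PP_jacobi[OF Am(2)] by (simp add: power_0_left sum_delta0)
    moreover have "(A + 2) gchoose (m + 2) > 0"
      unfolding gch_ff ff_def using Am by (intro divide_pos_pos prod_pos) auto
    ultimately show ?thesis unfolding PBe using Kc0 kap0 by simp
  qed
  moreover have "\<forall>i<m. 0 < rho i \<and> rho i < 1" using z(1) by (simp add: rho_def)
  moreover have "\<forall>i. Suc i < m \<longrightarrow> rho i < rho (Suc i)" using z(2) by (simp add: rho_def)
  moreover have "\<forall>i. m \<le> i \<longrightarrow> rho i = 1" by (simp add: rho_def)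
  ultimately show ?thesis by blast
qed

lemma part2:
  fixes d m :: nat and a0 :: real and rho :: "nat \<Rightarrow> real"
  assumes d1: "d \<ge> 1"
    and PBr: "\<forall>x. PB d q x = a0 * (\<Prod>i<m + 2. x\<^sup>2 - rho i)"
    and rb: "\<forall>i<m. 0 < rho i \<and> rho i < 1"
    and rm: "\<forall>i. Suc i < m \<longrightarrow> rho i < rho (Suc i)"
    and r1: "\<forall>i. m \<le> i \<longrightarrow> rho i = 1"
  shows "\<exists>tau. (\<forall>i<m + 1. 0 < tau i \<and> tau i < 1) \<and>
     (\<forall>x>1. RB d q x = 4 * (real (m + 2) * (real d / 2 + real m + 1) * a0) * (\<Prod>i<m + 1. x\<^sup>2 - tau i))"
proof -
  define al where "al = real d / 2"
  have al0: "al > 0" using d1 unfolding al_def by simp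
  define G where "G = (\<Prod>i<m. [:- rho i, 1::real:])"
  define F where "F = smult a0 (G * [:-1, 1:] * [:-1, 1:])"
  have Fprod: "F = smult a0 (\<Prod>i<m + 2. [:- rho i, 1:])"
    unfolding F_def G_def using r1 by simp
  have Fpoly: "poly F u = a0 * (\<Prod>i<m + 2. u - rho i)" for u
  proof -
    have "poly F u = a0 * (\<Prod>i<m + 2. poly [:- rho i, 1:] u)"
      unfolding Fprod by (simp only: poly_smult poly_prod)
    also have "(\<Prod>i<m + 2. poly [:- rho i, 1:] u) = (\<Prod>i<m + 2. u - rho i)"
      by (intro prod.cong) auto
    finally show ?thesis .
  qed
  have PBF: "\<forall>x. PB d q x = poly F (x\<^sup>2)"
    using PBr unfolding Fpoly by simp
  define F1 where "F1 = pderiv F"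
  define F2 where "F2 = pderiv F1"
  have rb': "0 < rho i \<and> rho i \<le> 1" for i using rb r1
    by (cases "i < m") (auto simp: less_imp_le)
  have Fz: "poly F (rho i) = 0" if "i \<le> m" for i
  proof -
    have "(\<Prod>i<m + 2. poly [:- rho i, 1:] (rho i')) = 0" if "i' < m + 2" for i'
      using that by (intro prod_zero) auto
    then show ?thesis unfolding Fprod using that by (simp add: poly_prod)
  qed
  have "\<exists>y. \<forall>i<m. rho i < y i \<and> y i < rho (Suc i) \<and> poly F1 (y i) = 0"
  proof (rule rolle_chain[where a = 0 and b = 1 and f = "poly F"])
    show "\<And>i. i < m \<Longrightarrow> rho i < rho (Suc i)"
      using rm rb r1 by (metis Suc_lessI order_refl)
    show "\<And>i. i \<le> m \<Longrightarrow> poly F (rho i) = 0" by (rule Fz)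
    show "\<And>i. i \<le> m \<Longrightarrow> 0 \<le> rho i \<and> rho i \<le> 1" using rb' by (simp add: less_imp_le)
    show "continuous_on {0..1} (poly F)" by (intro continuous_intros)
    show "\<And>x. 0 < x \<Longrightarrow> x < 1 \<Longrightarrow> (poly F has_real_derivative poly F1 x) (at x)"
      unfolding F1_def by simp
  qed
  then obtain sg0 where sg0: "\<forall>i<m. rho i < sg0 i \<and> sg0 i < rho (Suc i) \<and> poly F1 (sg0 i) = 0"
    by blast
  have F1at1: "poly F1 1 = 0"
  proof -
    have "F1 = smult a0 ((G * [:-1, 1:]) * pderiv [:-1, 1:] + [:-1, 1:] * pderiv (G * [:-1, 1:]))"
      unfolding F1_def F_def pderiv_smult pderiv_mult[of "G * [:-1, 1:]"] ..
    then show ?thesis by simp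
  qed
  define sg where "sg i = (if i < m then sg0 i else 1)" for i
  have sgz: "poly F1 (sg i) = 0" if "i \<le> m" for i
    using sg0 F1at1 that by (simp add: sg_def)
  have sgb: "0 < sg i \<and> sg i \<le> 1" for i
  proof (cases "i < m")
    case True
    then have "rho i < sg0 i" "sg0 i < rho (Suc i)" using sg0 by auto
    then show ?thesis using True rb'[of i] rb'[of "Suc i"] by (simp add: sg_def)
  qed (simp add: sg_def)
  have sgm: "sg i < sg (Suc i)" if "i < m" for i
  proof (cases "Suc i < m")
    case True
    then have "sg0 i < rho (Suc i)" "rho (Suc i) < sg0 (Suc i)" using sg0 that by auto
    then show ?thesis using True that by (simp add: sg_def)
  next
    case False
    then have si: "Suc i = m" using that by simp
    then have "sg0 i < rho (Suc i)" using sg0 that by auto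
    moreover have "rho (Suc i) = 1" using r1 si by simp
    ultimately show ?thesis using si that by (simp add: sg_def)
  qed
  define Rp where "Rp = smult al F1 + [:0, 1:] * F2"
  define h where "h u = u powr al * poly F1 u" for u
  define h' where "h' u = al * u powr (al - 1) * poly F1 u + u powr al * poly F2 u" for u
  define w where "w i = (if i = 0 then 0 else sg (i - 1))" for i
  have "\<exists>y. \<forall>i<m + 1. w i < y i \<and> y i < w (Suc i) \<and> h' (y i) = 0"
  proof (rule rolle_chain[where a = 0 and b = 1 and f = h])
    show "\<And>i. i < m + 1 \<Longrightarrow> w i < w (Suc i)"
    proof -
      fix i assume "i < m + 1"
      then show "w i < w (Suc i)"
        using sgb[of 0] sgm[of "i - 1"] by (cases i) (auto simp: w_def)
    qed
    show "\<And>i. i \<le> m + 1 \<Longrightarrow> h (w i) = 0"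
    proof -
      fix i assume "i \<le> m + 1"
      then show "h (w i) = 0" using sgz[of "i - 1"] by (cases i) (auto simp: w_def h_def)
    qed
    show "\<And>i. i \<le> m + 1 \<Longrightarrow> 0 \<le> w i \<and> w i \<le> 1"
      using sgb by (auto simp: w_def less_imp_le)
    show "continuous_on {0..1} h"
      unfolding h_def[abs_def] using al0
      by (intro continuous_intros continuous_on_powr') auto
    show "\<And>x. 0 < x \<Longrightarrow> x < 1 \<Longrightarrow> (h has_real_derivative h' x) (at x)"
    proof -
      fix x :: real assume "0 < x" "x < 1"
      then show "(h has_real_derivative h' x) (at x)"
      proof -
        have d1: "((\<lambda>x. x powr al) has_real_derivative al * x powr (al - 1)) (at x)"
          by (rule has_real_derivative_powr) fact
        have d2: "((\<lambda>x. poly F1 x) has_real_derivative poly (pderiv F1) x) (at x)"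
          by (rule poly_DERIV)
        have "((\<lambda>u. u powr al * poly F1 u) has_real_derivative
            al * x powr (al - 1) * poly F1 x + poly (pderiv F1) x * x powr al) (at x)"
          by (rule DERIV_mult[OF d1 d2])
        then show ?thesis unfolding h_def[abs_def] h'_def F2_def
          by (rule DERIV_cong) (simp add: algebra_simps)
      qed
    qed
  qed
  then obtain tau where tau: "\<forall>i<m + 1. w i < tau i \<and> tau i < w (Suc i) \<and> h' (tau i) = 0"
    by blast
  have wb: "0 \<le> w i \<and> w i \<le> 1" for i using sgb by (auto simp: w_def less_imp_le)
  have taub: "0 < tau i \<and> tau i < 1" if "i < m + 1" for i
    using tau that wb[of i] wb[of "Suc i"] by force
  have Rz: "poly Rp (tau i) = 0" if "i < m + 1" for i
  proof -
    have t: "0 < tau i" "tau i < 1" using taub that by auto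
    have "h' (tau i) = tau i powr (al - 1) * poly Rp (tau i)"
      unfolding h'_def Rp_def using t
      by (simp add: algebra_simps powr_add[symmetric] powr_mult_base)
    then show ?thesis using tau that t by simp
  qed
  have taum: "tau i < tau (Suc i)" if "Suc i < m + 1" for i
    using tau that by (meson Suc_lessD order.strict_trans)
  have taud: "tau i \<noteq> tau j" if "i < m + 1" "j < m + 1" "i \<noteq> j" for i j
    using chain_mono[of "m + 1" tau] taum that by (metis nat_neq_iff less_irrefl)
  have mon: "degree (\<Prod>i<m + 2. [:- rho i, 1:]) = m + 2 \<and> coeff (\<Prod>i<m + 2. [:- rho i, 1:]) (m + 2) = 1"
    by (rule monic_linear_prod)
  have degF: "degree F \<le> m + 2" unfolding Fprod using mon
    by (metis degree_smult_le)
  have cF: "coeff F (m + 2) = a0" unfolding Fprod using mon by simp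
  have degF1: "degree F1 \<le> m + 1" unfolding F1_def degree_pderiv using degF by simp
  have degF2: "degree F2 \<le> m" unfolding F2_def degree_pderiv using degF1 by simp
  have degR: "degree Rp \<le> m + 1"
  proof -
    have "degree ([:0, 1:] * F2) \<le> degree [:0, 1::real:] + degree F2" by (rule degree_mult_le)
    then have "degree ([:0, 1:] * F2) \<le> m + 1" using degF2 by simp
    moreover have "degree (smult al F1) \<le> m + 1" using degF1 by (meson degree_smult_le order.trans)
    ultimately show ?thesis unfolding Rp_def by (meson degree_add_le)
  qed
  have cR: "coeff Rp (m + 1) = real (m + 2) * (al + real m + 1) * a0"
  proof -
    have "coeff ([:0, 1:] * F2) (m + 1) = coeff F2 m" by simp
    moreover have "coeff F2 m = real (m + 1) * real (m + 2) * a0"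
      unfolding F2_def F1_def using cF by (simp add: coeff_pderiv)
    moreover have "coeff F1 (m + 1) = real (m + 2) * a0"
      unfolding F1_def using cF by (simp add: coeff_pderiv)
    ultimately show ?thesis unfolding Rp_def by (simp add: algebra_simps)
  qed
  have Rfac: "poly Rp u = coeff Rp (m + 1) * (\<Prod>i<m + 1. u - tau i)" for u
    by (rule poly_factor_roots[OF degR]) (use Rz taud in auto)
  have "RB d q x = 4 * (real (m + 2) * (real d / 2 + real m + 1) * a0) * (\<Prod>i<m + 1. x\<^sup>2 - tau i)"
    if "x > 1" for x
  proof -
    have "RB d q x = 4 * (real d / 2 * poly (pderiv F) (x\<^sup>2) + x\<^sup>2 * poly (pderiv (pderiv F)) (x\<^sup>2))"
      by (rule RB_poly[OF PBF]) (use that in auto)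
    also have "\<dots> = 4 * poly Rp (x\<^sup>2)"
      unfolding Rp_def F2_def F1_def al_def by simp
    finally show ?thesis unfolding Rfac cR al_def by simp
  qed
  then show ?thesis using taub by blast
qed

theorem lemmaB6:
  fixes d q :: nat
  assumes "d \<ge> 1" and "q \<ge> 2" and "even q"
  shows "(\<exists>(a0::real) (a::nat \<Rightarrow> real).
            (\<forall>x. PB d q x = a0 * (\<Prod>i=1..q div 2 + 1. x\<^sup>2 - (a i)\<^sup>2)) \<and>
            (q mod 4 = 2 \<longrightarrow> a0 > 0) \<and> (q mod 4 = 0 \<longrightarrow> a0 < 0) \<and>
            0 < a 1 \<and> (\<forall>i. 1 \<le> i \<and> i < q div 2 \<longrightarrow> a i < a (i + 1)) \<and>
            a (q div 2) = 1 \<and> a (q div 2 + 1) = 1) \<and>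
         (\<forall>j \<le> q - 2.
            (q mod 4 = 2 \<longrightarrow>
               mono_on {1<..} (\<lambda>x. RB d q x / x ^ j) \<and> (\<forall>x>1. RB d q x / x ^ j > 0)) \<and>
            (q mod 4 = 0 \<longrightarrow>
               antimono_on {1<..} (\<lambda>x. RB d q x / x ^ j) \<and> (\<forall>x>1. RB d q x / x ^ j < 0)))"
proof -
  define m where "m = q div 2 - 1"
  have n1: "q div 2 + 1 = m + 2" "q div 2 = m + 1" using assms(2) unfolding m_def by auto
  obtain a0 rho where PBr: "\<forall>x. PB d q x = a0 * (\<Prod>i<m + 2. x\<^sup>2 - rho i)"
    and rb: "\<forall>i<m. 0 < rho i \<and> rho i < 1" and rm: "\<forall>i. Suc i < m \<longrightarrow> rho i < rho (Suc i)"
    and r1: "\<forall>i. m \<le> i \<longrightarrow> rho i = 1" and PB0: "PB d q 0 > 0"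
    using pb_setup[OF assms(1,2)] unfolding m_def by blast
  have rpos: "0 < rho i" for i using rb r1 by (cases "i < m") auto
  have par: "q mod 4 = 2 \<Longrightarrow> even m" "q mod 4 = 0 \<Longrightarrow> odd m"
    using assms(2,3) unfolding m_def by presburger+
  define P where "P = (\<Prod>i<m + 2. rho i)"
  have sgn: "PB d q 0 = a0 * ((-1) ^ (m + 2) * P)"
  proof -
    have "(\<Prod>i<m + 2. (0::real)\<^sup>2 - rho i) = (\<Prod>i<m + 2. (-1) * rho i)" by simp
    also have "\<dots> = (\<Prod>i<m + 2. (-1::real)) * (\<Prod>i<m + 2. rho i)" by (rule prod.distrib)
    also have "\<dots> = (-1) ^ (m + 2) * (\<Prod>i<m + 2. rho i)" by (simp only: prod_constant card_lessThan)
    finally show ?thesis using PBr unfolding P_def by simp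
  qed
  have Ppos: "P > 0" unfolding P_def using rpos by (intro prod_pos) auto
  have a0pos: "q mod 4 = 2 \<Longrightarrow> a0 > 0"
  proof -
    assume "q mod 4 = 2"
    then have "(-1::real) ^ (m + 2) = 1" using par(1) by simp
    then show "a0 > 0" using PB0 sgn Ppos by (simp add: zero_less_mult_iff)
  qed
  have a0neg: "q mod 4 = 0 \<Longrightarrow> a0 < 0"
  proof -
    assume "q mod 4 = 0"
    then have "(-1::real) ^ (m + 2) = -1" using par(2) by simp
    then show "a0 < 0" using PB0 sgn Ppos by (simp add: mult_less_0_iff)
  qed
  define a where "a i = sqrt (rho (i - 1))" for i
  have part1: "(\<forall>x. PB d q x = a0 * (\<Prod>i=1..q div 2 + 1. x\<^sup>2 - (a i)\<^sup>2)) \<and>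
            (q mod 4 = 2 \<longrightarrow> a0 > 0) \<and> (q mod 4 = 0 \<longrightarrow> a0 < 0) \<and>
            0 < a 1 \<and> (\<forall>i. 1 \<le> i \<and> i < q div 2 \<longrightarrow> a i < a (i + 1)) \<and>
            a (q div 2) = 1 \<and> a (q div 2 + 1) = 1"
  proof (intro conjI allI impI)
    fix x :: real
    have "(\<Prod>i=1..q div 2 + 1. x\<^sup>2 - (a i)\<^sup>2) = (\<Prod>k<m + 2. x\<^sup>2 - (a (Suc k))\<^sup>2)"
      unfolding n1 using prod.atLeast1_atMost_eq[of "\<lambda>i. x\<^sup>2 - (a i)\<^sup>2" "m + 2"] by simp
    also have "\<dots> = (\<Prod>k<m + 2. x\<^sup>2 - rho k)"
      using rpos by (intro prod.cong) (auto simp: a_def less_imp_le)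
    finally show "PB d q x = a0 * (\<Prod>i=1..q div 2 + 1. x\<^sup>2 - (a i)\<^sup>2)" using PBr by simp
  next
    show "0 < a 1" using rpos[of 0] by (simp add: a_def)
  next
    fix i assume i: "1 \<le> i \<and> i < q div 2"
    have "rho (i - 1) < rho i"
    proof (cases "i < m")
      case True
      then show ?thesis using rm i by (metis Suc_diff_1 less_le_trans zero_less_one)
    next
      case False
      then have "i = m" using i n1 by simp
      then show ?thesis using rb r1 i by simp
    qed
    then show "a i < a (i + 1)" by (simp add: a_def)
  next
    show "a (q div 2) = 1" "a (q div 2 + 1) = 1" using r1 n1 by (simp_all add: a_def)
  qed (use a0pos a0neg in auto)
  obtain tau where taub: "\<forall>i<m + 1. 0 < tau i \<and> tau i < 1"
    and RBf: "\<forall>x>1. RB d q x = 4 * (real (m + 2) * (real d / 2 + real m + 1) * a0) * (\<Prod>i<m + 1. x\<^sup>2 - tau i)"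
    using part2[OF assms(1) PBr rb rm r1] by blast
  define c where "c = 4 * (real (m + 2) * (real d / 2 + real m + 1))"
  have c0: "c > 0" unfolding c_def by simp
  have part2': "(q mod 4 = 2 \<longrightarrow>
               mono_on {1<..} (\<lambda>x. RB d q x / x ^ j) \<and> (\<forall>x>1. RB d q x / x ^ j > 0)) \<and>
            (q mod 4 = 0 \<longrightarrow>
               antimono_on {1<..} (\<lambda>x. RB d q x / x ^ j) \<and> (\<forall>x>1. RB d q x / x ^ j < 0))"
    if j: "j \<le> q - 2" for j
  proof -
    define f where "f x = (\<Prod>i<m + 1. x\<^sup>2 - tau i) / x ^ j" for x :: real
    have "j \<le> 2 * (m + 1)" using j assms(2) unfolding m_def by presburger
    then have pf: "(\<forall>x>1. 0 < f x) \<and> (\<forall>x y. 1 < x \<longrightarrow> x \<le> y \<longrightarrow> f x \<le> f y)"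
      unfolding f_def using prodq[OF taub] by blast
    have eq: "RB d q x / x ^ j = (c * a0) * f x" if "x > 1" for x
    proof -
      have "RB d q x = (c * a0) * (\<Prod>i<m + 1. x\<^sup>2 - tau i)"
        using RBf that unfolding c_def by (auto simp only: mult.assoc)
      then show ?thesis unfolding f_def by simp
    qed
    show ?thesis
    proof (intro conjI impI)
      assume "q mod 4 = 2"
      then have ca: "c * a0 > 0" using a0pos c0 by simp
      show "mono_on {1<..} (\<lambda>x. RB d q x / x ^ j)"
      proof (rule mono_onI)
        fix r s :: real assume "r \<in> {1<..}" "s \<in> {1<..}" "r \<le> s"
        then have rs: "1 < r" "1 < s" "r \<le> s" by auto
        then have "f r \<le> f s" using pf by blast
        then have "(c * a0) * f r \<le> (c * a0) * f s" using ca by (intro mult_left_mono) auto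
        then show "RB d q r / r ^ j \<le> RB d q s / s ^ j"
          using eq[OF rs(1)] eq[OF rs(2)] by simp
      qed
      show "\<forall>x>1. RB d q x / x ^ j > 0"
      proof (intro allI impI)
        fix x :: real assume x: "1 < x"
        then have "0 < f x" using pf by blast
        then show "RB d q x / x ^ j > 0" using eq[OF x] ca by simp
      qed
    next
      assume "q mod 4 = 0"
      then have ca: "c * a0 < 0" using a0neg c0 by (simp add: mult_pos_neg)
      show "antimono_on {1<..} (\<lambda>x. RB d q x / x ^ j)"
      proof (rule monotone_onI)
        fix r s :: real assume "r \<in> {1<..}" "s \<in> {1<..}" "r \<le> s"
        then have rs: "1 < r" "1 < s" "r \<le> s" by auto
        then have "f r \<le> f s" using pf by blast
        then have "(c * a0) * f s \<le> (c * a0) * f r" using ca by (intro mult_left_mono_neg) auto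
        then show "RB d q s / s ^ j \<le> RB d q r / r ^ j"
          using eq[OF rs(1)] eq[OF rs(2)] by simp
      qed
      show "\<forall>x>1. RB d q x / x ^ j < 0"
      proof (intro allI impI)
        fix x :: real assume x: "1 < x"
        then have "0 < f x" using pf by blast
        then show "RB d q x / x ^ j < 0" using eq[OF x] ca by (simp add: mult_neg_pos)
      qed
    qed
  qed
  show ?thesis
  proof (rule conjI)
    show "\<forall>j \<le> q - 2.
            (q mod 4 = 2 \<longrightarrow>
               mono_on {1<..} (\<lambda>x. RB d q x / x ^ j) \<and> (\<forall>x>1. RB d q x / x ^ j > 0)) \<and>
            (q mod 4 = 0 \<longrightarrow>
               antimono_on {1<..} (\<lambda>x. RB d q x / x ^ j) \<and> (\<forall>x>1. RB d q x / x ^ j < 0))"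
      using part2' by blast
  qed (rule exI[of _ a0], rule exI[of _ a], rule part1)
qed

end
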